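(* Let $f\colon A\to X$ and $g\colon A\to Y$ be morphisms in a pre-Hilbert $*$-category, and suppose there is an extension of $g$ along $f$ (a morphism $e\colon X\to Y$ with $ef=g$). Then: (i) there is a unique extension $h$ of $g$ along $f$ such that $\operatorname{Ker} h\geq (\operatorname{Ran} f)^\perp$; (ii) for this $h$, $(\operatorname{Ran} h)^{\perp\perp} = (\operatorname{Ran} g)^{\perp\perp}$; (iii) $f^*f=g^*g$ if and only if $h$ is partially isometric and $\operatorname{Ker} h\leq (\operatorname{Ran} f)^\perp$; (iv) if $f$ is epic, then $f^*f=g^*g$ if and only if $h$ is isometric; (v) if $f$ and $g$ are both epic, then $f^*f=g^*g$ if and only if $h$ is unitary.
   Context: A $*$-category is a category with a choice of $f^*\colon Y\to X$ for each $f\colon X\to Y$ such that $1^*=1$, $(gf)^*=f^*g^*$, $(f^* )^*=f$; $f$ is an isometry if $f^*f=1$, unitary if it is an invertible isometry, and a partial isometry if $f=ff^*f$. A pre-Hilbert $*$-category is a $*$-category with (R1) a zero object, (R2) orthonormal biproducts of all pairs of objects (biproducts $(X,s_1,r_1,s_2,r_2)$ with $r_k=s_k^*$), (R3) an isometric kernel for every morphism, and (R4) every diagonal $\Delta\colon X\to X\oplus X$ a kernel of some morphism. Subobjects of an object are compared by the usual preorder ($m\le n$ iff $m$ factors through $n$). $\operatorname{Ker} h$ is the subobject represented by a kernel of $h$. The range $\operatorname{Ran} f$ is the smallest subobject of the codomain through which $f$ factors (it exists in a pre-Hilbert $*$-category). For a subobject represented by a monomorphism $m$, its orthogonal complement $(\cdot)^\perp$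 is the subobject represented by a kernel of $m^*$; in particular $(\operatorname{Ran} f)^\perp=\operatorname{Ker} f^*$, and $(\cdot)^{\perp\perp}$ is the complement applied twice. *)

theory Defs
  imports Main
begin

text \<open>A category presented by objects, arrows, domain/codomain, identities and
  composition (Comp g f is g after f, meaningful when Dom g = Cod f), together with
  an involution Star.\<close>

record ('o, 'm) starcat =
  Obj  :: "'o set"
  Arr  :: "'m set"
  Dom  :: "'m \<Rightarrow> 'o"
  Cod  :: "'m \<Rightarrow> 'o"
  Idm  :: "'o \<Rightarrow> 'm"
  Comp :: "'m \<Rightarrow> 'm \<Rightarrow> 'm"
  Star :: "'m \<Rightarrow> 'm"

definition hom :: "('o, 'm) starcat \<Rightarrow> 'o \<Rightarrow> 'o \<Rightarrow> 'm set" where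
  "hom C x y = {f \<in> Arr C. Dom C f = x \<and> Cod C f = y}"

definition is_category :: "('o, 'm) starcat \<Rightarrow> bool" where
  "is_category C \<longleftrightarrow>
     (\<forall>f\<in>Arr C. Dom C f \<in> Obj C \<and> Cod C f \<in> Obj C) \<and>
     (\<forall>x\<in>Obj C. Idm C x \<in> hom C x x) \<and>
     (\<forall>f\<in>Arr C. \<forall>g\<in>Arr C. Dom C g = Cod C f \<longrightarrow> Comp C g f \<in> hom C (Dom C f) (Cod C g)) \<and>
     (\<forall>f\<in>Arr C. \<forall>g\<in>Arr C. \<forall>h\<in>Arr C. Dom C g = Cod C f \<longrightarrow> Dom C h = Cod C g \<longrightarrow>
         Comp C h (Comp C g f) = Comp C (Comp C h g) f) \<and>
     (\<forall>f\<in>Arr C. Comp C (Idm C (Cod C f)) f = f \<and> Comp C f (Idm C (Dom C f)) = f)"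

definition is_star_category :: "('o, 'm) starcat \<Rightarrow> bool" where
  "is_star_category C \<longleftrightarrow> is_category C \<and>
     (\<forall>f\<in>Arr C. Star C f \<in> hom C (Cod C f) (Dom C f)) \<and>
     (\<forall>x\<in>Obj C. Star C (Idm C x) = Idm C x) \<and>
     (\<forall>f\<in>Arr C. \<forall>g\<in>Arr C. Dom C g = Cod C f \<longrightarrow>
         Star C (Comp C g f) = Comp C (Star C f) (Star C g)) \<and>
     (\<forall>f\<in>Arr C. Star C (Star C f) = f)"

definition is_isometry :: "('o, 'm) starcat \<Rightarrow> 'm \<Rightarrow> bool" where
  "is_isometry C f \<longleftrightarrow> f \<in> Arr C \<and> Comp C (Star C f) f = Idm C (Dom C f)"

definition is_iso :: "('o, 'm) starcat \<Rightarrow> 'm \<Rightarrow> bool" where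
  "is_iso C f \<longleftrightarrow> f \<in> Arr C \<and> (\<exists>g\<in>hom C (Cod C f) (Dom C f).
       Comp C g f = Idm C (Dom C f) \<and> Comp C f g = Idm C (Cod C f))"

definition is_unitary :: "('o, 'm) starcat \<Rightarrow> 'm \<Rightarrow> bool" where
  "is_unitary C f \<longleftrightarrow> is_isometry C f \<and> is_iso C f"

definition is_partial_isometry :: "('o, 'm) starcat \<Rightarrow> 'm \<Rightarrow> bool" where
  "is_partial_isometry C f \<longleftrightarrow> f \<in> Arr C \<and> f = Comp C f (Comp C (Star C f) f)"

definition is_mono :: "('o, 'm) starcat \<Rightarrow> 'm \<Rightarrow> bool" where
  "is_mono C m \<longleftrightarrow> m \<in> Arr C \<and>
     (\<forall>a\<in>Arr C. \<forall>b\<in>Arr C. Cod C a = Dom C m \<longrightarrow> Cod C b = Dom C m \<longrightarrow> Dom C a = Dom C b \<longrightarrow>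
        Comp C m a = Comp C m b \<longrightarrow> a = b)"

definition is_epi :: "('o, 'm) starcat \<Rightarrow> 'm \<Rightarrow> bool" where
  "is_epi C e \<longleftrightarrow> e \<in> Arr C \<and>
     (\<forall>a\<in>Arr C. \<forall>b\<in>Arr C. Dom C a = Cod C e \<longrightarrow> Dom C b = Cod C e \<longrightarrow> Cod C a = Cod C b \<longrightarrow>
        Comp C a e = Comp C b e \<longrightarrow> a = b)"

definition is_zero_object :: "('o, 'm) starcat \<Rightarrow> 'o \<Rightarrow> bool" where
  "is_zero_object C z \<longleftrightarrow> z \<in> Obj C \<and>
     (\<forall>x\<in>Obj C. (\<exists>!a. a \<in> hom C x z) \<and> (\<exists>!a. a \<in> hom C z x))"

definition is_zero_morphism :: "('o, 'm) starcat \<Rightarrow> 'm \<Rightarrow> bool" where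
  "is_zero_morphism C f \<longleftrightarrow> f \<in> Arr C \<and>
     (\<exists>z a b. is_zero_object C z \<and> a \<in> hom C (Dom C f) z \<and> b \<in> hom C z (Cod C f) \<and>
        f = Comp C b a)"

definition is_kernel :: "('o, 'm) starcat \<Rightarrow> 'm \<Rightarrow> 'm \<Rightarrow> bool" where
  "is_kernel C f k \<longleftrightarrow> f \<in> Arr C \<and> k \<in> Arr C \<and> Cod C k = Dom C f \<and>
     is_zero_morphism C (Comp C f k) \<and>
     (\<forall>m\<in>Arr C. Cod C m = Dom C f \<longrightarrow> is_zero_morphism C (Comp C f m) \<longrightarrow>
        (\<exists>!u. u \<in> hom C (Dom C m) (Dom C k) \<and> Comp C k u = m))"

definition is_product :: "('o, 'm) starcat \<Rightarrow> 'o \<Rightarrow> 'o \<Rightarrow> 'o \<Rightarrow> 'm \<Rightarrow> 'm \<Rightarrow> bool" where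
  "is_product C X1 X2 X r1 r2 \<longleftrightarrow> X \<in> Obj C \<and> r1 \<in> hom C X X1 \<and> r2 \<in> hom C X X2 \<and>
     (\<forall>Z\<in>Obj C. \<forall>p1\<in>hom C Z X1. \<forall>p2\<in>hom C Z X2.
        (\<exists>!u. u \<in> hom C Z X \<and> Comp C r1 u = p1 \<and> Comp C r2 u = p2))"

definition is_coproduct :: "('o, 'm) starcat \<Rightarrow> 'o \<Rightarrow> 'o \<Rightarrow> 'o \<Rightarrow> 'm \<Rightarrow> 'm \<Rightarrow> bool" where
  "is_coproduct C X1 X2 X s1 s2 \<longleftrightarrow> X \<in> Obj C \<and> s1 \<in> hom C X1 X \<and> s2 \<in> hom C X2 X \<and>
     (\<forall>Z\<in>Obj C. \<forall>p1\<in>hom C X1 Z. \<forall>p2\<in>hom C X2 Z.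
        (\<exists>!u. u \<in> hom C X Z \<and> Comp C u s1 = p1 \<and> Comp C u s2 = p2))"

definition is_biproduct ::
  "('o, 'm) starcat \<Rightarrow> 'o \<Rightarrow> 'o \<Rightarrow> 'o \<Rightarrow> 'm \<Rightarrow> 'm \<Rightarrow> 'm \<Rightarrow> 'm \<Rightarrow> bool" where
  "is_biproduct C X1 X2 X s1 r1 s2 r2 \<longleftrightarrow>
     is_product C X1 X2 X r1 r2 \<and> is_coproduct C X1 X2 X s1 s2 \<and>
     Comp C r1 s1 = Idm C X1 \<and> Comp C r2 s2 = Idm C X2 \<and>
     is_zero_morphism C (Comp C r2 s1) \<and> is_zero_morphism C (Comp C r1 s2)"

definition is_pre_hilbert_star_category :: "('o, 'm) starcat \<Rightarrow> bool" where
  "is_pre_hilbert_star_category C \<longleftrightarrow> is_star_category C \<and>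
     \<comment> \<open>(R1)\<close> (\<exists>z. is_zero_object C z) \<and>
     \<comment> \<open>(R2)\<close> (\<forall>X1\<in>Obj C. \<forall>X2\<in>Obj C. \<exists>X s1 s2.
         is_biproduct C X1 X2 X s1 (Star C s1) s2 (Star C s2)) \<and>
     \<comment> \<open>(R3)\<close> (\<forall>f\<in>Arr C. \<exists>k. is_kernel C f k \<and> is_isometry C k) \<and>
     \<comment> \<open>(R4)\<close> (\<forall>A X s1 r1 s2 r2 d. is_biproduct C A A X s1 r1 s2 r2 \<longrightarrow> d \<in> hom C A X \<longrightarrow>
         Comp C r1 d = Idm C A \<longrightarrow> Comp C r2 d = Idm C A \<longrightarrow>
         (\<exists>h\<in>Arr C. is_kernel C h d))"

text \<open>Preorder on subobjects (represented by monomorphisms): m \<le> n iff m factors through n.\<close>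
definition subobj_le :: "('o, 'm) starcat \<Rightarrow> 'm \<Rightarrow> 'm \<Rightarrow> bool" where
  "subobj_le C m n \<longleftrightarrow> Cod C m = Cod C n \<and> (\<exists>u. u \<in> hom C (Dom C m) (Dom C n) \<and> Comp C n u = m)"

definition subobj_eq :: "('o, 'm) starcat \<Rightarrow> 'm \<Rightarrow> 'm \<Rightarrow> bool" where
  "subobj_eq C m n \<longleftrightarrow> subobj_le C m n \<and> subobj_le C n m"

definition factors_through :: "('o, 'm) starcat \<Rightarrow> 'm \<Rightarrow> 'm \<Rightarrow> bool" where
  "factors_through C f m \<longleftrightarrow> Cod C m = Cod C f \<and> (\<exists>u. u \<in> hom C (Dom C f) (Dom C m) \<and> Comp C m u = f)"

text \<open>r represents Ran f: the smallest subobject of the codomain through which f factors.\<close>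
definition is_range :: "('o, 'm) starcat \<Rightarrow> 'm \<Rightarrow> 'm \<Rightarrow> bool" where
  "is_range C f r \<longleftrightarrow> f \<in> Arr C \<and> is_mono C r \<and> factors_through C f r \<and>
     (\<forall>m. is_mono C m \<longrightarrow> factors_through C f m \<longrightarrow> subobj_le C r m)"

definition is_perp :: "('o, 'm) starcat \<Rightarrow> 'm \<Rightarrow> 'm \<Rightarrow> bool" where
  "is_perp C m p \<longleftrightarrow> is_kernel C (Star C m) p"

text \<open>Ker h \<ge> (Ran f)^\<perp>, stated for all representatives.\<close>
definition ker_ge_ran_perp :: "('o, 'm) starcat \<Rightarrow> 'm \<Rightarrow> 'm \<Rightarrow> bool" where
  "ker_ge_ran_perp C h f \<longleftrightarrow>
     (\<forall>k r p. is_kernel C h k \<longrightarrow> is_range C f r \<longrightarrow> is_perp C r p \<longrightarrow> subobj_le C p k)"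

definition ker_le_ran_perp :: "('o, 'm) starcat \<Rightarrow> 'm \<Rightarrow> 'm \<Rightarrow> bool" where
  "ker_le_ran_perp C h f \<longleftrightarrow>
     (\<forall>k r p. is_kernel C h k \<longrightarrow> is_range C f r \<longrightarrow> is_perp C r p \<longrightarrow> subobj_le C k p)"

text \<open>(Ran h)^{\<perp>\<perp>} = (Ran g)^{\<perp>\<perp>}, stated for all representatives.\<close>
definition ran_perpperp_eq :: "('o, 'm) starcat \<Rightarrow> 'm \<Rightarrow> 'm \<Rightarrow> bool" where
  "ran_perpperp_eq C h g \<longleftrightarrow>
     (\<forall>r1 p1 q1 r2 p2 q2. is_range C h r1 \<longrightarrow> is_perp C r1 p1 \<longrightarrow> is_perp C p1 q1 \<longrightarrow>
        is_range C g r2 \<longrightarrow> is_perp C r2 p2 \<longrightarrow> is_perp C p2 q2 \<longrightarrow> subobj_eq C q1 q2)"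

definition is_extension :: "('o, 'm) starcat \<Rightarrow> 'm \<Rightarrow> 'm \<Rightarrow> 'm \<Rightarrow> bool" where
  "is_extension C f g e \<longleftrightarrow> e \<in> hom C (Cod C f) (Cod C g) \<and> Comp C e f = g"

end

theory Submission
  imports Defs
begin


locale phc =
  fixes C :: "('o,'m) starcat"
  assumes phc: "is_pre_hilbert_star_category C"
begin

abbreviation cmp (infixr "\<cdot>" 70) where "g \<cdot> f \<equiv> Comp C g f"
abbreviation st where "st f \<equiv> Star C f"
abbreviation zr where "zr f \<equiv> is_zero_morphism C f"
abbreviation I where "I x \<equiv> Idm C x"

lemma cat: "is_category C" and star: "is_star_category C"
  using phc unfolding is_pre_hilbert_star_category_def is_star_category_def by auto

lemma dom_obj[simp]: "f \<in> Arr C \<Longrightarrow> Dom C f \<in> Obj C"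
  and cod_obj[simp]: "f \<in> Arr C \<Longrightarrow> Cod C f \<in> Obj C"
  using cat unfolding is_category_def by auto

lemma comp_arr[simp]: "f \<in> Arr C \<Longrightarrow> g \<in> Arr C \<Longrightarrow> Dom C g = Cod C f \<Longrightarrow> g \<cdot> f \<in> Arr C"
  and comp_dom[simp]: "f \<in> Arr C \<Longrightarrow> g \<in> Arr C \<Longrightarrow> Dom C g = Cod C f \<Longrightarrow> Dom C (g \<cdot> f) = Dom C f"
  and comp_cod[simp]: "f \<in> Arr C \<Longrightarrow> g \<in> Arr C \<Longrightarrow> Dom C g = Cod C f \<Longrightarrow> Cod C (g \<cdot> f) = Cod C g"
  using cat unfolding is_category_def hom_def by auto

lemma assoc[simp]: "f \<in> Arr C \<Longrightarrow> g \<in> Arr C \<Longrightarrow> h \<in> Arr C \<Longrightarrow> Dom C g = Cod C f \<Longrightarrow> Dom C h = Cod C g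
   \<Longrightarrow> (h \<cdot> g) \<cdot> f = h \<cdot> (g \<cdot> f)"
proof -
  have "\<forall>f\<in>Arr C. \<forall>g\<in>Arr C. \<forall>h\<in>Arr C. Dom C g = Cod C f \<longrightarrow> Dom C h = Cod C g \<longrightarrow>
         Comp C h (Comp C g f) = Comp C (Comp C h g) f" using cat unfolding is_category_def by blast
  then show "f \<in> Arr C \<Longrightarrow> g \<in> Arr C \<Longrightarrow> h \<in> Arr C \<Longrightarrow> Dom C g = Cod C f \<Longrightarrow> Dom C h = Cod C g
   \<Longrightarrow> (h \<cdot> g) \<cdot> f = h \<cdot> (g \<cdot> f)" by simp
qed

lemma id_arr[simp]: "x \<in> Obj C \<Longrightarrow> I x \<in> Arr C"
  and id_dom[simp]: "x \<in> Obj C \<Longrightarrow> Dom C (I x) = x"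
  and id_cod[simp]: "x \<in> Obj C \<Longrightarrow> Cod C (I x) = x"
  using cat unfolding is_category_def hom_def by auto

lemma idl[simp]: "f \<in> Arr C \<Longrightarrow> Cod C f = y \<Longrightarrow> I y \<cdot> f = f"
  and idr[simp]: "f \<in> Arr C \<Longrightarrow> Dom C f = x \<Longrightarrow> f \<cdot> I x = f"
  using cat unfolding is_category_def by auto

lemma st_arr[simp]: "f \<in> Arr C \<Longrightarrow> st f \<in> Arr C"
  and st_dom[simp]: "f \<in> Arr C \<Longrightarrow> Dom C (st f) = Cod C f"
  and st_cod[simp]: "f \<in> Arr C \<Longrightarrow> Cod C (st f) = Dom C f"
  using star unfolding is_star_category_def hom_def by auto

lemma st_st[simp]: "f \<in> Arr C \<Longrightarrow> st (st f) = f"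
  and st_id[simp]: "x \<in> Obj C \<Longrightarrow> st (I x) = I x"
  and st_comp[simp]: "f \<in> Arr C \<Longrightarrow> g \<in> Arr C \<Longrightarrow> Dom C g = Cod C f \<Longrightarrow> st (g \<cdot> f) = st f \<cdot> st g"
  using star unfolding is_star_category_def by auto

lemma zero_arr: "zr f \<Longrightarrow> f \<in> Arr C"
  unfolding is_zero_morphism_def by auto

lemma zero_intro: "f \<in> Arr C \<Longrightarrow> is_zero_object C z \<Longrightarrow> a \<in> hom C (Dom C f) z \<Longrightarrow> b \<in> hom C z (Cod C f)
  \<Longrightarrow> f = b \<cdot> a \<Longrightarrow> zr f"
  unfolding is_zero_morphism_def by blast

lemma zero_compL: "zr f \<Longrightarrow> g \<in> Arr C \<Longrightarrow> Dom C g = Cod C f \<Longrightarrow> zr (g \<cdot> f)"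
proof -
  assume z: "zr f" and g: "g \<in> Arr C" "Dom C g = Cod C f"
  then obtain zz a b where zz: "is_zero_object C zz" "a \<in> hom C (Dom C f) zz" "b \<in> hom C zz (Cod C f)"
    "f = b \<cdot> a" and f: "f \<in> Arr C" unfolding is_zero_morphism_def by blast
  have a: "a \<in> Arr C" "Dom C a = Dom C f" "Cod C a = zz" and b: "b \<in> Arr C" "Dom C b = zz" "Cod C b = Cod C f"
    using zz(2,3) unfolding hom_def by auto
  have "(g \<cdot> b) \<cdot> a = g \<cdot> (b \<cdot> a)" using a b g by simp
  then have "g \<cdot> f = (g \<cdot> b) \<cdot> a" using zz(4) by simp
  moreover have "g \<cdot> b \<in> hom C zz (Cod C (g \<cdot> f))" using b g f unfolding hom_def by simp
  moreover have "a \<in> hom C (Dom C (g \<cdot> f)) zz" using a g f unfolding hom_def by simp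
  moreover have "g \<cdot> f \<in> Arr C" using g f by simp
  ultimately show ?thesis using zero_intro zz(1) by metis
qed

lemma zero_compR: "zr f \<Longrightarrow> g \<in> Arr C \<Longrightarrow> Cod C g = Dom C f \<Longrightarrow> zr (f \<cdot> g)"
proof -
  assume z: "zr f" and g: "g \<in> Arr C" "Cod C g = Dom C f"
  then obtain zz a b where zz: "is_zero_object C zz" "a \<in> hom C (Dom C f) zz" "b \<in> hom C zz (Cod C f)"
    "f = b \<cdot> a" and f: "f \<in> Arr C" unfolding is_zero_morphism_def by blast
  have a: "a \<in> Arr C" "Dom C a = Dom C f" "Cod C a = zz" and b: "b \<in> Arr C" "Dom C b = zz" "Cod C b = Cod C f"
    using zz(2,3) unfolding hom_def by auto
  have "(b \<cdot> a) \<cdot> g = b \<cdot> (a \<cdot> g)" using a b g by simp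
  then have "f \<cdot> g = b \<cdot> (a \<cdot> g)" using zz(4) by simp
  moreover have "b \<in> hom C zz (Cod C (f \<cdot> g))" using b g f unfolding hom_def by simp
  moreover have "a \<cdot> g \<in> hom C (Dom C (f \<cdot> g)) zz" using a g f unfolding hom_def by simp
  moreover have "f \<cdot> g \<in> Arr C" using g f by simp
  ultimately show ?thesis using zero_intro zz(1) by metis
qed

lemma zero_st: "zr f \<Longrightarrow> zr (st f)"
proof -
  assume z: "zr f"
  then obtain zz a b where zz: "is_zero_object C zz" "a \<in> hom C (Dom C f) zz" "b \<in> hom C zz (Cod C f)"
    "f = b \<cdot> a" and f: "f \<in> Arr C" unfolding is_zero_morphism_def by blast
  have a: "a \<in> Arr C" "Dom C a = Dom C f" "Cod C a = zz" and b: "b \<in> Arr C" "Dom C b = zz" "Cod C b = Cod C f"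
    using zz(2,3) unfolding hom_def by auto
  have "st (b \<cdot> a) = st a \<cdot> st b" using a b by simp
  then have "st f = st a \<cdot> st b" using zz(4) by simp
  moreover have "st a \<in> hom C zz (Cod C (st f))" "st b \<in> hom C (Dom C (st f)) zz"
    using a b f unfolding hom_def by auto
  moreover have "st f \<in> Arr C" using f by simp
  ultimately show ?thesis using zero_intro zz(1) by metis
qed

lemma zin_uniq: "is_zero_object C z \<Longrightarrow> a \<in> hom C x z \<Longrightarrow> b \<in> hom C x z \<Longrightarrow> a = b"
proof -
  assume z: "is_zero_object C z" and ab: "a \<in> hom C x z" "b \<in> hom C x z"
  have "x \<in> Obj C" using ab(1) unfolding hom_def by auto
  then have "\<exists>!a. a \<in> hom C x z" using z unfolding is_zero_object_def by blast
  then show ?thesis using ab by blast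
qed

lemma zout_uniq: "is_zero_object C z \<Longrightarrow> a \<in> hom C z x \<Longrightarrow> b \<in> hom C z x \<Longrightarrow> a = b"
proof -
  assume z: "is_zero_object C z" and ab: "a \<in> hom C z x" "b \<in> hom C z x"
  have "x \<in> Obj C" using ab(1) unfolding hom_def by auto
  then have "\<exists>!a. a \<in> hom C z x" using z unfolding is_zero_object_def by blast
  then show ?thesis using ab by blast
qed

lemma zero_uniq: "zr f \<Longrightarrow> zr g \<Longrightarrow> Dom C f = Dom C g \<Longrightarrow> Cod C f = Cod C g \<Longrightarrow> f = g"
proof -
  assume zf: "zr f" and zg: "zr g" and dc: "Dom C f = Dom C g" "Cod C f = Cod C g"
  obtain z a b where z: "is_zero_object C z" "a \<in> hom C (Dom C f) z" "b \<in> hom C z (Cod C f)"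
    and fe: "f = b \<cdot> a" using zf unfolding is_zero_morphism_def by blast
  obtain z' a' b' where z': "is_zero_object C z'" "a' \<in> hom C (Dom C g) z'" "b' \<in> hom C z' (Cod C g)"
    and ge: "g = b' \<cdot> a'" using zg unfolding is_zero_morphism_def by blast
  have zo: "z \<in> Obj C" "z' \<in> Obj C" using z(1) z'(1) unfolding is_zero_object_def by auto
  obtain i where i: "i \<in> hom C z z'" using z'(1) zo unfolding is_zero_object_def by blast
  have a: "a \<in> Arr C" "Cod C a = z" "Dom C a = Dom C g" and b': "b' \<in> Arr C" "Dom C b' = z'" "Cod C b' = Cod C f"
   and ii: "i \<in> Arr C" "Dom C i = z" "Cod C i = z'"
    using z(2) z'(3) i dc unfolding hom_def by auto
  have "i \<cdot> a \<in> hom C (Dom C g) z'" using a ii unfolding hom_def by simp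
  then have 1: "a' = i \<cdot> a" using zin_uniq[OF z'(1) z'(2)] by simp
  have "b' \<cdot> i \<in> hom C z (Cod C f)" using b' ii unfolding hom_def by simp
  then have 2: "b = b' \<cdot> i" using zout_uniq[OF z(1) z(3)] by simp
  have "(b' \<cdot> i) \<cdot> a = b' \<cdot> (i \<cdot> a)" using a b' ii by simp
  then show "f = g" using 1 2 fe ge by simp
qed

lemma ker_arr: "is_kernel C a k \<Longrightarrow> k \<in> Arr C \<and> Cod C k = Dom C a \<and> a \<in> Arr C \<and> zr (a \<cdot> k)"
  unfolding is_kernel_def by auto

lemma ker_fac: "is_kernel C a k \<Longrightarrow> m \<in> Arr C \<Longrightarrow> Cod C m = Dom C a \<Longrightarrow> zr (a \<cdot> m) \<Longrightarrow>
   \<exists>u. u \<in> Arr C \<and> Dom C u = Dom C m \<and> Cod C u = Dom C k \<and> k \<cdot> u = m"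
  unfolding is_kernel_def hom_def by blast

lemma isoker_ex: "a \<in> Arr C \<Longrightarrow> \<exists>k. is_kernel C a k \<and> st k \<cdot> k = I (Dom C k)"
  using phc unfolding is_pre_hilbert_star_category_def is_isometry_def by blast

lemma iso_cancel[simp]: "st k \<cdot> k = I (Dom C k) \<Longrightarrow> k \<in> Arr C \<Longrightarrow> x \<in> Arr C \<Longrightarrow> Cod C x = Dom C k
   \<Longrightarrow> st k \<cdot> (k \<cdot> x) = x"
proof -
  assume a: "st k \<cdot> k = I (Dom C k)" "k \<in> Arr C" "x \<in> Arr C" "Cod C x = Dom C k"
  have "(st k \<cdot> k) \<cdot> x = st k \<cdot> (k \<cdot> x)" using a(2-4) by simp
  moreover have "(st k \<cdot> k) \<cdot> x = x" using a by simp
  ultimately show ?thesis by simp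
qed

lemma iso_mono: "st k \<cdot> k = I (Dom C k) \<Longrightarrow> k \<in> Arr C \<Longrightarrow> x \<in> Arr C \<Longrightarrow> Cod C x = Dom C k
   \<Longrightarrow> y \<in> Arr C \<Longrightarrow> Cod C y = Dom C k \<Longrightarrow> k \<cdot> x = k \<cdot> y \<Longrightarrow> x = y"
  by (metis iso_cancel)

end



context phc
begin

lemma R2: "X1 \<in> Obj C \<Longrightarrow> X2 \<in> Obj C \<Longrightarrow> \<exists>X s1 s2. is_biproduct C X1 X2 X s1 (st s1) s2 (st s2)"
  using phc unfolding is_pre_hilbert_star_category_def by blast

lemma R4: "is_biproduct C A A X s1 r1 s2 r2 \<Longrightarrow> d \<in> hom C A X \<Longrightarrow> r1 \<cdot> d = I A \<Longrightarrow> r2 \<cdot> d = I A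
   \<Longrightarrow> \<exists>h\<in>Arr C. is_kernel C h d"
proof -
  have "\<forall>A X s1 r1 s2 r2 d. is_biproduct C A A X s1 r1 s2 r2 \<longrightarrow> d \<in> hom C A X \<longrightarrow>
         Comp C r1 d = Idm C A \<longrightarrow> Comp C r2 d = Idm C A \<longrightarrow> (\<exists>h\<in>Arr C. is_kernel C h d)"
    using phc unfolding is_pre_hilbert_star_category_def by blast
  then show "is_biproduct C A A X s1 r1 s2 r2 \<Longrightarrow> d \<in> hom C A X \<Longrightarrow> r1 \<cdot> d = I A \<Longrightarrow> r2 \<cdot> d = I A
   \<Longrightarrow> \<exists>h\<in>Arr C. is_kernel C h d" by blast
qed

lemma diff:
  assumes x: "x \<in> Arr C" and y: "y \<in> Arr C" and dd: "Dom C x = Dom C y" and cc: "Cod C x = Cod C y"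
  shows "\<exists>d. d \<in> Arr C \<and> Dom C d = Dom C x \<and>
     (\<forall>z. z \<in> Arr C \<longrightarrow> Cod C z = Dom C x \<longrightarrow> (zr (d \<cdot> z) \<longleftrightarrow> x \<cdot> z = y \<cdot> z))"
proof -
  define Y where "Y = Cod C x"
  have Y: "Y \<in> Obj C" using x Y_def by simp
  obtain B s1 s2 where bp: "is_biproduct C Y Y B s1 (st s1) s2 (st s2)"
    using R2[OF Y Y] by blast
  then have pr: "is_product C Y Y B (st s1) (st s2)" unfolding is_biproduct_def by blast
  have B: "B \<in> Obj C" and r1: "st s1 \<in> hom C B Y" and r2: "st s2 \<in> hom C B Y"
    using pr unfolding is_product_def by blast+
  have up: "\<And>Z p1 p2. Z \<in> Obj C \<Longrightarrow> p1 \<in> hom C Z Y \<Longrightarrow> p2 \<in> hom C Z Y \<Longrightarrow>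
      \<exists>!u. u \<in> hom C Z B \<and> st s1 \<cdot> u = p1 \<and> st s2 \<cdot> u = p2"
    using pr unfolding is_product_def by blast
  have r1a: "st s1 \<in> Arr C" "Dom C (st s1) = B" "Cod C (st s1) = Y"
   and r2a: "st s2 \<in> Arr C" "Dom C (st s2) = B" "Cod C (st s2) = Y" using r1 r2 unfolding hom_def by auto
  have "I Y \<in> hom C Y Y" using Y unfolding hom_def by simp
  then obtain D where D: "D \<in> hom C Y B" "st s1 \<cdot> D = I Y" "st s2 \<cdot> D = I Y" using up[OF Y] by blast
  have Da: "D \<in> Arr C" "Dom C D = Y" "Cod C D = B" using D(1) unfolding hom_def by auto
  obtain hh where hh: "hh \<in> Arr C" "is_kernel C hh D" using R4[OF bp D] by blast
  have hhD: "Dom C hh = B" "zr (hh \<cdot> D)" using ker_arr[OF hh(2)] Da by auto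
  have xh: "x \<in> hom C (Dom C x) Y" "y \<in> hom C (Dom C x) Y" using x y dd cc Y_def unfolding hom_def by auto
  have "\<exists>!u. u \<in> hom C (Dom C x) B \<and> st s1 \<cdot> u = x \<and> st s2 \<cdot> u = y"
    using up[of "Dom C x", OF _ xh] x by simp
  then obtain pp where pp: "pp \<in> hom C (Dom C x) B" "st s1 \<cdot> pp = x" "st s2 \<cdot> pp = y"
    by blast
  have ppa: "pp \<in> Arr C" "Dom C pp = Dom C x" "Cod C pp = B" using pp(1) unfolding hom_def by auto
  define d where "d = hh \<cdot> pp"
  have da: "d \<in> Arr C" "Dom C d = Dom C x" using hh hhD ppa d_def by auto
  have "zr (d \<cdot> z) \<longleftrightarrow> x \<cdot> z = y \<cdot> z" if z: "z \<in> Arr C" "Cod C z = Dom C x" for z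
  proof
    assume e: "x \<cdot> z = y \<cdot> z"
    have xz: "x \<cdot> z \<in> Arr C" "Dom C (x \<cdot> z) = Dom C z" "Cod C (x \<cdot> z) = Y" using x z Y_def by auto
    have yz: "y \<cdot> z \<in> hom C (Dom C z) Y" using y z dd cc Y_def unfolding hom_def by auto
    have 1: "pp \<cdot> z \<in> hom C (Dom C z) B" using ppa z unfolding hom_def by auto
    have 2: "D \<cdot> (x \<cdot> z) \<in> hom C (Dom C z) B" using Da xz unfolding hom_def by auto
    have 3: "st s1 \<cdot> (pp \<cdot> z) = x \<cdot> z" "st s2 \<cdot> (pp \<cdot> z) = y \<cdot> z"
      using pp(2,3)[symmetric] ppa r1a r2a z by simp_all
    have "(st s1 \<cdot> D) \<cdot> (x \<cdot> z) = st s1 \<cdot> (D \<cdot> (x \<cdot> z))" "(st s2 \<cdot> D) \<cdot> (x \<cdot> z) = st s2 \<cdot> (D \<cdot> (x \<cdot> z))"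
      using Da xz r1a r2a by simp_all
    then have 4: "st s1 \<cdot> (D \<cdot> (x \<cdot> z)) = x \<cdot> z" "st s2 \<cdot> (D \<cdot> (x \<cdot> z)) = y \<cdot> z"
      using D(2,3) xz e by simp_all
    have "Dom C z \<in> Obj C" using z by simp
    from up[OF this _ yz] xz have "\<exists>!u. u \<in> hom C (Dom C z) B \<and> st s1 \<cdot> u = x \<cdot> z \<and> st s2 \<cdot> u = y \<cdot> z"
      unfolding hom_def by simp
    then have 5: "pp \<cdot> z = D \<cdot> (x \<cdot> z)" using 1 2 3 4 by blast
    have "d \<cdot> z = hh \<cdot> (pp \<cdot> z)" using d_def hh hhD ppa z by simp
    also have "\<dots> = hh \<cdot> (D \<cdot> (x \<cdot> z))" using 5 by simp
    also have "\<dots> = (hh \<cdot> D) \<cdot> (x \<cdot> z)" using hh hhD Da xz by simp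
    finally have e2: "d \<cdot> z = (hh \<cdot> D) \<cdot> (x \<cdot> z)" .
    have "zr ((hh \<cdot> D) \<cdot> (x \<cdot> z))" by (rule zero_compR[OF hhD(2)]) (use xz Da hh hhD in simp_all)
    then show "zr (d \<cdot> z)" using e2 by simp
  next
    assume zz: "zr (d \<cdot> z)"
    have "d \<cdot> z = hh \<cdot> (pp \<cdot> z)" using d_def hh hhD ppa z by simp
    then have "zr (hh \<cdot> (pp \<cdot> z))" using zz by simp
    then obtain u where u: "u \<in> Arr C" "Cod C u = Dom C D" "D \<cdot> u = pp \<cdot> z"
      using ker_fac[OF hh(2), of "pp \<cdot> z"] ppa z hhD by auto
    have "x \<cdot> z = st s1 \<cdot> (pp \<cdot> z)" "y \<cdot> z = st s2 \<cdot> (pp \<cdot> z)"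
      using pp(2,3)[symmetric] ppa r1a r2a z by simp_all
    then have "x \<cdot> z = st s1 \<cdot> (D \<cdot> u)" "y \<cdot> z = st s2 \<cdot> (D \<cdot> u)" using u(3) by simp_all
    moreover have "st s1 \<cdot> (D \<cdot> u) = (st s1 \<cdot> D) \<cdot> u" "st s2 \<cdot> (D \<cdot> u) = (st s2 \<cdot> D) \<cdot> u"
      using u Da r1a r2a by simp_all
    ultimately show "x \<cdot> z = y \<cdot> z" using D(2,3) u Da by simp
  qed
  then show ?thesis using da by blast
qed

lemma eq_by_diff:
  assumes x: "x \<in> Arr C" and y: "y \<in> Arr C" and dd: "Dom C x = Dom C y" and cc: "Cod C x = Cod C y"
    and H: "\<And>d. d \<in> Arr C \<Longrightarrow> Dom C d = Dom C x \<Longrightarrow>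
      (\<forall>z. z \<in> Arr C \<longrightarrow> Cod C z = Dom C x \<longrightarrow> (zr (d \<cdot> z) \<longleftrightarrow> x \<cdot> z = y \<cdot> z)) \<Longrightarrow> zr d"
  shows "x = y"
proof -
  obtain d where d: "d \<in> Arr C" "Dom C d = Dom C x"
     "\<forall>z. z \<in> Arr C \<longrightarrow> Cod C z = Dom C x \<longrightarrow> (zr (d \<cdot> z) \<longleftrightarrow> x \<cdot> z = y \<cdot> z)"
    using diff[OF x y dd cc] by blast
  have "zr d" using H d by blast
  moreover have "d \<cdot> I (Dom C x) = d" using d by simp
  ultimately have "x \<cdot> I (Dom C x) = y \<cdot> I (Dom C x)" using d(3) x by (metis id_arr id_cod dom_obj)
  then show ?thesis using x y dd by simp
qed

end



context phc
begin

definition pat where "pat a p q v \<longleftrightarrow> a \<in> Arr C \<and> is_kernel C (st a) p \<and> st p \<cdot> p = I (Dom C p) \<and>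
   is_kernel C (st p) q \<and> st q \<cdot> q = I (Dom C q) \<and> v \<in> Arr C \<and> Cod C v = Dom C q \<and>
   Dom C v = Dom C a \<and> q \<cdot> v = a"

lemma pat_ex: assumes a: "a \<in> Arr C" shows "\<exists>p q v. pat a p q v"
proof -
  obtain p where p: "is_kernel C (st a) p" "st p \<cdot> p = I (Dom C p)" using isoker_ex[of "st a"] a by auto
  have pa: "p \<in> Arr C" "Cod C p = Cod C a" "zr (st a \<cdot> p)" using ker_arr[OF p(1)] a by auto
  obtain q where q: "is_kernel C (st p) q" "st q \<cdot> q = I (Dom C q)" using isoker_ex[of "st p"] pa by auto
  have qa: "q \<in> Arr C" "Cod C q = Cod C a" using ker_arr[OF q(1)] pa by auto
  have "st (st a \<cdot> p) = st p \<cdot> a" using a pa by simp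
  then have "zr (st p \<cdot> a)" using zero_st[OF pa(3)] by simp
  then obtain v where v: "v \<in> Arr C" "Dom C v = Dom C a" "Cod C v = Dom C q" "q \<cdot> v = a"
    using ker_fac[OF q(1), of a] a pa by auto
  show ?thesis unfolding pat_def using a p q v by blast
qed

lemma pat_facts: assumes "pat a p q v"
  shows "a \<in> Arr C" "p \<in> Arr C" "Cod C p = Cod C a" "q \<in> Arr C" "Cod C q = Cod C a"
    "zr (st a \<cdot> p)" "zr (st p \<cdot> q)" "zr (st q \<cdot> p)" "st p \<cdot> p = I (Dom C p)" "st q \<cdot> q = I (Dom C q)"
    "v \<in> Arr C" "Cod C v = Dom C q" "Dom C v = Dom C a"
    "is_kernel C (st a) p" "is_kernel C (st p) q"
proof -
  have k1: "is_kernel C (st a) p" and k2: "is_kernel C (st p) q" and a: "a \<in> Arr C"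
    using assms unfolding pat_def by auto
  show "a \<in> Arr C" "p \<in> Arr C" "Cod C p = Cod C a" "q \<in> Arr C" "Cod C q = Cod C a"
    "zr (st a \<cdot> p)" "zr (st p \<cdot> q)"
    using ker_arr[OF k1] ker_arr[OF k2] a by auto
  then have "st (st p \<cdot> q) = st q \<cdot> p" by simp
  then show "zr (st q \<cdot> p)" using zero_st[OF \<open>zr (st p \<cdot> q)\<close>] by simp
  show "st p \<cdot> p = I (Dom C p)" "st q \<cdot> q = I (Dom C q)"
    "v \<in> Arr C" "Cod C v = Dom C q" "Dom C v = Dom C a"
    "is_kernel C (st a) p" "is_kernel C (st p) q" using assms unfolding pat_def by auto
qed

lemma pat_eq: "pat a p q v \<Longrightarrow> q \<cdot> v = a" unfolding pat_def by auto

lemma pat_st: assumes P: "pat a p q v" shows "st a = st v \<cdot> st q"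
proof -
  have "st (q \<cdot> v) = st v \<cdot> st q" using pat_facts[OF P] by simp
  then show ?thesis using pat_eq[OF P] by simp
qed

lemma pat_P1: assumes P: "pat a p q v" and w: "w \<in> Arr C" "Cod C w = Cod C a" "zr (st a \<cdot> w)"
  shows "\<exists>t. t \<in> Arr C \<and> Dom C t = Dom C w \<and> Cod C t = Dom C p \<and> p \<cdot> t = w"
  using ker_fac[OF pat_facts(14)[OF P], of w] w pat_facts[OF P] by auto

lemma pat_P2: assumes P: "pat a p q v" and w: "w \<in> Arr C" "Cod C w = Cod C a"
  shows "zr (st q \<cdot> w) \<longleftrightarrow> zr (st a \<cdot> w)"
proof
  note F = pat_facts[OF P]
  assume z: "zr (st q \<cdot> w)"
  have "st a = st v \<cdot> st q" using pat_st[OF P] .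
  then have "st a \<cdot> w = st v \<cdot> (st q \<cdot> w)" using F w by simp
  then show "zr (st a \<cdot> w)" using zero_compL[OF z, of "st v"] F w by simp
next
  note F = pat_facts[OF P]
  assume z: "zr (st a \<cdot> w)"
  obtain t where t: "t \<in> Arr C" "Cod C t = Dom C p" "p \<cdot> t = w" using pat_P1[OF P w z] by blast
  have "st q \<cdot> w = (st q \<cdot> p) \<cdot> t" using t F by simp
  then show "zr (st q \<cdot> w)" using zero_compR[OF F(8), of t] t F by simp
qed

lemma pat_P3: assumes P: "pat a p q v" and w: "w \<in> Arr C" "Cod C w = Dom C q" "zr (st v \<cdot> w)"
  shows "zr w"
proof -
  note F = pat_facts[OF P]
  have "st a = st v \<cdot> st q" using pat_st[OF P] .
  then have "st a \<cdot> (q \<cdot> w) = st v \<cdot> (st q \<cdot> (q \<cdot> w))" using F w by simp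
  also have "\<dots> = st v \<cdot> w" using F w by simp
  finally have "zr (st a \<cdot> (q \<cdot> w))" using w by simp
  then obtain t where t: "t \<in> Arr C" "Cod C t = Dom C p" "p \<cdot> t = q \<cdot> w"
    using pat_P1[OF P, of "q \<cdot> w"] F w by auto
  have "w = st q \<cdot> (q \<cdot> w)" using F w by simp
  also have "\<dots> = st q \<cdot> (p \<cdot> t)" using t by simp
  also have "\<dots> = (st q \<cdot> p) \<cdot> t" using t F by simp
  finally show "zr w" using zero_compR[OF F(8), of t] t F by simp
qed

lemma pat_cancel: assumes P: "pat a p q v" and x: "x \<in> Arr C" "Dom C x = Dom C q"
  and y: "y \<in> Arr C" "Dom C y = Dom C q" "Cod C x = Cod C y" and e: "x \<cdot> v = y \<cdot> v"
  shows "x = y"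
proof (rule eq_by_diff[OF x(1) y(1)])
  note F = pat_facts[OF P]
  show "Dom C x = Dom C y" "Cod C x = Cod C y" using x y by auto
  fix d assume d: "d \<in> Arr C" "Dom C d = Dom C x"
    "\<forall>z. z \<in> Arr C \<longrightarrow> Cod C z = Dom C x \<longrightarrow> (zr (d \<cdot> z) \<longleftrightarrow> x \<cdot> z = y \<cdot> z)"
  have "zr (d \<cdot> v)" using d(3) F x e by auto
  then have "zr (st (d \<cdot> v))" by (rule zero_st)
  moreover have "st (d \<cdot> v) = st v \<cdot> st d" using d F x by simp
  ultimately have "zr (st d)" using pat_P3[OF P, of "st d"] d x by simp
  then have "zr (st (st d))" by (rule zero_st)
  then show "zr d" using d by simp
qed

lemma pat_joint: assumes P: "pat a p q v" and x: "x \<in> Arr C" "Dom C x = Cod C a"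
  and y: "y \<in> Arr C" "Dom C y = Cod C a" "Cod C x = Cod C y" and e: "x \<cdot> p = y \<cdot> p" "x \<cdot> q = y \<cdot> q"
  shows "x = y"
proof (rule eq_by_diff[OF x(1) y(1)])
  note F = pat_facts[OF P]
  show "Dom C x = Dom C y" "Cod C x = Cod C y" using x y by auto
  fix d assume d: "d \<in> Arr C" "Dom C d = Dom C x"
    "\<forall>z. z \<in> Arr C \<longrightarrow> Cod C z = Dom C x \<longrightarrow> (zr (d \<cdot> z) \<longleftrightarrow> x \<cdot> z = y \<cdot> z)"
  have dp: "zr (d \<cdot> p)" using d(3) F x e by auto
  have dq: "zr (d \<cdot> q)" using d(3) F x e by auto
  have "st (d \<cdot> q) = st q \<cdot> st d" using d F x by simp
  then have "zr (st q \<cdot> st d)" using zero_st[OF dq] by simp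
  then have "zr (st a \<cdot> st d)" using pat_P2[OF P, of "st d"] d x by simp
  then obtain t where t: "t \<in> Arr C" "Cod C t = Dom C p" "p \<cdot> t = st d"
    using pat_P1[OF P, of "st d"] d x by auto
  have "st (d \<cdot> p) = st p \<cdot> st d" using d F x by simp
  also have "\<dots> = st p \<cdot> (p \<cdot> t)" using t by simp
  also have "\<dots> = t" using t(1,2) F by simp
  finally have "zr t" using zero_st[OF dp] by simp
  then have "zr (p \<cdot> t)" using zero_compL[of t p] t F by simp
  then have "zr (st (st d))" using t zero_st by simp
  then show "zr d" using d by simp
qed

end



context phc
begin

lemma iso_is_mono: "st k \<cdot> k = I (Dom C k) \<Longrightarrow> k \<in> Arr C \<Longrightarrow> is_mono C k"
  unfolding is_mono_def using iso_mono by blast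

lemma range_ex: assumes f: "f \<in> Arr C" shows "\<exists>r. is_range C f r"
proof -
  obtain k c v where P: "pat (st f) k c v" using pat_ex[of "st f"] f by auto
  note F = pat_facts[OF P]
  have E: "c \<cdot> v = st f" using pat_eq[OF P] .
  have kf: "is_kernel C f k" using F(14) f by simp
  have Fk: "k \<in> Arr C" "Cod C k = Dom C f" "c \<in> Arr C" "Cod C c = Dom C f" using F f by auto
  define R where "R = f \<cdot> c"
  have R: "R \<in> Arr C" "Dom C R = Dom C c" "Cod C R = Cod C f" using R_def f Fk by auto
  have mono: "is_mono C R"
    unfolding is_mono_def
  proof (intro conjI ballI impI)
    show "R \<in> Arr C" using R by simp
    fix a b assume ab: "a \<in> Arr C" "b \<in> Arr C" "Cod C a = Dom C R" "Cod C b = Dom C R" "Dom C a = Dom C b"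
      "R \<cdot> a = R \<cdot> b"
    have eq: "\<And>x. x \<in> Arr C \<Longrightarrow> Cod C x = Dom C c \<Longrightarrow> st (R \<cdot> x) = (st (c \<cdot> x) \<cdot> c) \<cdot> v"
    proof -
      fix x assume x: "x \<in> Arr C" "Cod C x = Dom C c"
      have "st (R \<cdot> x) = st (c \<cdot> x) \<cdot> st f" using R_def x Fk f by simp
      also have "\<dots> = st (c \<cdot> x) \<cdot> (c \<cdot> v)" using E by simp
      also have "\<dots> = (st (c \<cdot> x) \<cdot> c) \<cdot> v" using x Fk F by simp
      finally show "st (R \<cdot> x) = (st (c \<cdot> x) \<cdot> c) \<cdot> v" .
    qed
    have "(st (c \<cdot> a) \<cdot> c) \<cdot> v = (st (c \<cdot> b) \<cdot> c) \<cdot> v" using eq[of a] eq[of b] ab R by simp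
    then have "st (c \<cdot> a) \<cdot> c = st (c \<cdot> b) \<cdot> c"
      by (rule pat_cancel[OF P, rotated -1]) (use ab R Fk in simp_all)
    moreover have "st (c \<cdot> a) \<cdot> c = st a" "st (c \<cdot> b) \<cdot> c = st b" using ab R Fk F by simp_all
    ultimately have "st a = st b" by simp
    then have "st (st a) = st (st b)" by simp
    then show "a = b" using ab by simp
  qed
  have fac: "R \<cdot> st c = f"
  proof -
    have "(f \<cdot> c) \<cdot> st c = f"
    proof (rule pat_joint[OF P])
      show "(f \<cdot> c) \<cdot> st c \<in> Arr C" "Dom C ((f \<cdot> c) \<cdot> st c) = Cod C (st f)" "f \<in> Arr C" "Dom C f = Cod C (st f)"
        "Cod C ((f \<cdot> c) \<cdot> st c) = Cod C f" using f Fk by auto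
      have z1: "zr ((f \<cdot> c) \<cdot> (st c \<cdot> k))" using zero_compL[OF F(8), of "f \<cdot> c"] f Fk by simp
      have z2: "zr (f \<cdot> k)" using F(6) f by simp
      have "(f \<cdot> c) \<cdot> (st c \<cdot> k) = f \<cdot> k" by (rule zero_uniq[OF z1 z2]) (use f Fk in simp_all)
      then show "((f \<cdot> c) \<cdot> st c) \<cdot> k = f \<cdot> k" using f Fk by simp
      show "((f \<cdot> c) \<cdot> st c) \<cdot> c = f \<cdot> c" using f Fk F by simp
    qed
    then show ?thesis using R_def by simp
  qed
  have sc: "st c \<in> hom C (Dom C f) (Dom C R)" using Fk R unfolding hom_def by simp
  have ft: "factors_through C f R" unfolding factors_through_def using fac sc R(3) by blast
  have "subobj_le C R m" if m: "is_mono C m" "factors_through C f m" for m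
  proof -
    obtain u where u: "u \<in> hom C (Dom C f) (Dom C m)" "m \<cdot> u = f" "Cod C m = Cod C f"
      using m(2) unfolding factors_through_def by blast
    have ma: "m \<in> Arr C" using m(1) unfolding is_mono_def by blast
    have ua: "u \<in> Arr C" "Dom C u = Dom C f" "Cod C u = Dom C m" using u(1) unfolding hom_def by auto
    have "m \<cdot> (u \<cdot> c) = (m \<cdot> u) \<cdot> c" using ma ua Fk by simp
    then have 1: "m \<cdot> (u \<cdot> c) = R" using u(2) R_def by simp
    have 2: "u \<cdot> c \<in> hom C (Dom C R) (Dom C m)" using ua Fk R unfolding hom_def by simp
    have 3: "Cod C R = Cod C m" using R(3) u(3) by simp
    show ?thesis unfolding subobj_le_def using 1 2 3 by blast
  qed
  then have "is_range C f R" unfolding is_range_def using f mono ft by blast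
  then show ?thesis by blast
qed

lemma range_Z: assumes r: "is_range C h r" and w: "w \<in> Arr C" "Cod C w = Cod C h"
  shows "zr (st r \<cdot> w) \<longleftrightarrow> zr (st h \<cdot> w)"
proof -
  have h: "h \<in> Arr C" and rm: "is_mono C r" and ft: "factors_through C h r"
    and mn: "\<And>m. is_mono C m \<Longrightarrow> factors_through C h m \<Longrightarrow> subobj_le C r m"
    using r unfolding is_range_def by auto
  have ra: "r \<in> Arr C" using rm unfolding is_mono_def by blast
  obtain u where u: "u \<in> hom C (Dom C h) (Dom C r)" "r \<cdot> u = h" "Cod C r = Cod C h"
    using ft unfolding factors_through_def by blast
  have ua: "u \<in> Arr C" "Dom C u = Dom C h" "Cod C u = Dom C r" using u(1) unfolding hom_def by auto
  obtain P Q v where P: "pat h P Q v" using pat_ex h by blast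
  note F = pat_facts[OF P]
  have Qm: "is_mono C Q" using iso_is_mono F by simp
  have "factors_through C h Q" unfolding factors_through_def hom_def using F pat_eq[OF P] by auto
  then have "subobj_le C r Q" using mn Qm by blast
  then obtain t where t: "t \<in> hom C (Dom C r) (Dom C Q)" "Q \<cdot> t = r"
    unfolding subobj_le_def by blast
  have ta: "t \<in> Arr C" "Dom C t = Dom C r" "Cod C t = Dom C Q" using t(1) unfolding hom_def by auto
  show ?thesis
  proof
    assume z: "zr (st r \<cdot> w)"
    have "st (r \<cdot> u) = st u \<cdot> st r" using ra ua by simp
    then have "st h \<cdot> w = st u \<cdot> (st r \<cdot> w)" using u(2) ra ua w u(3) by simp
    then show "zr (st h \<cdot> w)" using zero_compL[OF z, of "st u"] ua ra w u(3) by simp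
  next
    assume z: "zr (st h \<cdot> w)"
    then have zq: "zr (st Q \<cdot> w)" using pat_P2[OF P] w by simp
    have "st (Q \<cdot> t) = st t \<cdot> st Q" using ta F by simp
    then have "st r \<cdot> w = st t \<cdot> (st Q \<cdot> w)" using t(2) ta F w by simp
    then show "zr (st r \<cdot> w)" using zero_compL[OF zq, of "st t"] ta F w by simp
  qed
qed

lemma ker_le_Z: assumes k1: "is_kernel C a k1" and k2: "is_kernel C b k2" and d: "Dom C a = Dom C b"
  and H: "\<And>w. w \<in> Arr C \<Longrightarrow> Cod C w = Dom C a \<Longrightarrow> zr (a \<cdot> w) \<Longrightarrow> zr (b \<cdot> w)"
  shows "subobj_le C k1 k2"
proof -
  have 1: "k1 \<in> Arr C" "Cod C k1 = Dom C a" "zr (a \<cdot> k1)" using ker_arr[OF k1] by auto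
  have 2: "Cod C k2 = Dom C b" using ker_arr[OF k2] by auto
  obtain u where u: "u \<in> Arr C" "Dom C u = Dom C k1" "Cod C u = Dom C k2" "k2 \<cdot> u = k1"
    using ker_fac[OF k2, of k1] 1 d H by auto
  show ?thesis unfolding subobj_le_def hom_def using u 1 2 d by auto
qed

end



context phc
begin

lemma rng_facts: "is_range C f r \<Longrightarrow> r \<in> Arr C \<and> Cod C r = Cod C f \<and> f \<in> Arr C"
  unfolding is_range_def is_mono_def factors_through_def by auto

lemma sub_Z: assumes s: "subobj_le C m n" and m: "m \<in> Arr C" and n: "n \<in> Arr C"
  and w: "w \<in> Arr C" "Cod C w = Cod C n" and z: "zr (st n \<cdot> w)"
  shows "zr (st m \<cdot> w)"
proof -
  obtain u where u: "u \<in> hom C (Dom C m) (Dom C n)" "n \<cdot> u = m" "Cod C m = Cod C n"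
    using s unfolding subobj_le_def by blast
  have ua: "u \<in> Arr C" "Dom C u = Dom C m" "Cod C u = Dom C n" using u(1) unfolding hom_def by auto
  have "st (n \<cdot> u) = st u \<cdot> st n" using ua n by simp
  then have "st m \<cdot> w = st u \<cdot> (st n \<cdot> w)" using u(2) ua n w by simp
  then show ?thesis using zero_compL[OF z, of "st u"] ua n w by simp
qed

lemma ker_zero_comp: assumes k: "is_kernel C h k" and s: "subobj_le C m k" and m: "m \<in> Arr C"
  shows "zr (h \<cdot> m)"
proof -
  obtain u where u: "u \<in> hom C (Dom C m) (Dom C k)" "k \<cdot> u = m"
    using s unfolding subobj_le_def by blast
  have ua: "u \<in> Arr C" "Dom C u = Dom C m" "Cod C u = Dom C k" using u(1) unfolding hom_def by auto
  have ka: "k \<in> Arr C" "Cod C k = Dom C h" "h \<in> Arr C" "zr (h \<cdot> k)" using ker_arr[OF k] by auto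
  have "(h \<cdot> k) \<cdot> u = h \<cdot> (k \<cdot> u)" using ka ua by simp
  then have "h \<cdot> m = (h \<cdot> k) \<cdot> u" using u(2) by simp
  then show ?thesis using zero_compR[OF ka(4), of u] ua ka by simp
qed

end



context phc
begin

lemma iso_ff: assumes f: "f \<in> Arr C" and h: "h \<in> Arr C" "Dom C h = Cod C f" and hf: "h \<cdot> f = g"
  and i: "st h \<cdot> h = I (Dom C h)"
  shows "st f \<cdot> f = st g \<cdot> g"
proof -
  have "st (h \<cdot> f) \<cdot> (h \<cdot> f) = st f \<cdot> ((st h \<cdot> h) \<cdot> f)" using f h by simp
  also have "\<dots> = st f \<cdot> f" using i f h by simp
  finally show ?thesis using hf by simp
qed

lemma pi_ff: assumes f: "f \<in> Arr C" and h: "h \<in> Arr C" "Dom C h = Cod C f" and hf: "h \<cdot> f = g"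
  and pi: "is_partial_isometry C h" and kl: "ker_le_ran_perp C h f"
  shows "st f \<cdot> f = st g \<cdot> g"
proof -
  have PI: "h \<cdot> (st h \<cdot> h) = h" using pi unfolding is_partial_isometry_def by simp
  obtain K Cc v' where P: "pat (st h) K Cc v'" using pat_ex[of "st h"] h by auto
  note F = pat_facts[OF P]
  have E: "Cc \<cdot> v' = st h" using pat_eq[OF P] .
  have kh: "is_kernel C h K" using F(14) h by simp
  have Fa: "K \<in> Arr C" "Cod C K = Cod C f" "Cc \<in> Arr C" "Cod C Cc = Cod C f" "zr (h \<cdot> K)"
    "v' \<in> Arr C" "Cod C v' = Dom C Cc" "Dom C v' = Cod C h"
    using F h by auto
  have sPI: "st h \<cdot> (h \<cdot> st h) = st h"
  proof -
    have "st (h \<cdot> (st h \<cdot> h)) = st h \<cdot> (h \<cdot> st h)" using h by simp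
    then show ?thesis using PI by simp
  qed
  have A1: "Cc \<cdot> (v' \<cdot> (h \<cdot> (Cc \<cdot> v'))) = Cc \<cdot> v'"
  proof -
    have "Cc \<cdot> (v' \<cdot> (h \<cdot> (Cc \<cdot> v'))) = (Cc \<cdot> v') \<cdot> (h \<cdot> (Cc \<cdot> v'))" using Fa h by simp
    also have "\<dots> = st h \<cdot> (h \<cdot> st h)" using E by simp
    finally show ?thesis using sPI E by simp
  qed
  have "v' \<cdot> (h \<cdot> (Cc \<cdot> v')) = v'"
    by (rule iso_mono[OF F(10) F(4) _ _ _ _ A1]) (use Fa h in simp_all)
  then have "(v' \<cdot> (h \<cdot> Cc)) \<cdot> v' = I (Dom C Cc) \<cdot> v'" using Fa h by simp
  then have A2: "v' \<cdot> (h \<cdot> Cc) = I (Dom C Cc)"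
    by (rule pat_cancel[OF P, rotated -1]) (use Fa h in simp_all)
  have A: "st h \<cdot> (h \<cdot> Cc) = Cc"
  proof -
    have "(Cc \<cdot> v') \<cdot> (h \<cdot> Cc) = Cc \<cdot> (v' \<cdot> (h \<cdot> Cc))" using Fa h by simp
    then show ?thesis using A2 E Fa by simp
  qed
  obtain R where R: "is_range C f R" using range_ex f by blast
  have Ra: "R \<in> Arr C" "Cod C R = Cod C f" using rng_facts[OF R] by auto
  obtain p'' where p'': "is_kernel C (st R) p''" using isoker_ex[of "st R"] Ra by auto
  have p''a: "p'' \<in> Arr C" "Cod C p'' = Cod C f" "zr (st R \<cdot> p'')" using ker_arr[OF p''] Ra by auto
  have "subobj_le C K p''" using kl kh R p'' unfolding ker_le_ran_perp_def is_perp_def by blast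
  then obtain s where s: "s \<in> hom C (Dom C K) (Dom C p'')" "p'' \<cdot> s = K" unfolding subobj_le_def by blast
  have sa: "s \<in> Arr C" "Dom C s = Dom C K" "Cod C s = Dom C p''" using s(1) unfolding hom_def by auto
  have "zr (st f \<cdot> p'')" using range_Z[OF R, of p''] p''a by simp
  moreover have "st f \<cdot> K = (st f \<cdot> p'') \<cdot> s" using s(2) sa p''a f by simp
  ultimately have fK: "zr (st f \<cdot> K)" using zero_compR[of "st f \<cdot> p''" s] sa p''a f by simp
  define X where "X = st h \<cdot> (h \<cdot> f)"
  have Xa: "X \<in> Arr C" "Dom C X = Dom C f" "Cod C X = Cod C f" using X_def f h by auto
  have stX: "st X = st f \<cdot> (st h \<cdot> h)" using X_def f h by simp
  have "st X = st f"
  proof (rule pat_joint[OF P])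
    show "st X \<in> Arr C" "Dom C (st X) = Cod C (st h)" "st f \<in> Arr C" "Dom C (st f) = Cod C (st h)"
      "Cod C (st X) = Cod C (st f)" using Xa f h by auto
    have "st X \<cdot> K = st f \<cdot> (st h \<cdot> (h \<cdot> K))" using stX f h Fa by simp
    moreover have "zr (st f \<cdot> (st h \<cdot> (h \<cdot> K)))"
      using zero_compL[OF Fa(5), of "st f \<cdot> st h"] f h Fa by simp
    ultimately have z1: "zr (st X \<cdot> K)" by simp
    show "st X \<cdot> K = st f \<cdot> K" by (rule zero_uniq[OF z1 fK]) (use Xa f Fa in simp_all)
    have "st X \<cdot> Cc = st f \<cdot> (st h \<cdot> (h \<cdot> Cc))" using stX f h Fa by simp
    then show "st X \<cdot> Cc = st f \<cdot> Cc" using A by simp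
  qed
  then have "X = f" using Xa f by (metis st_st)
  then have "st f \<cdot> (st h \<cdot> (h \<cdot> f)) = st f \<cdot> f" using X_def by simp
  moreover have "st (h \<cdot> f) \<cdot> (h \<cdot> f) = st f \<cdot> (st h \<cdot> (h \<cdot> f))" using f h by simp
  ultimately show ?thesis using hf by simp
qed

end



context phc
begin

lemma main:
  assumes f: "f \<in> Arr C" and g: "g \<in> Arr C" and dfg: "Dom C f = Dom C g"
    and ex: "\<exists>e. is_extension C f g e"
  shows "\<exists>h0. is_extension C f g h0 \<and> ker_ge_ran_perp C h0 f \<and>
     (\<forall>h. is_extension C f g h \<and> ker_ge_ran_perp C h f \<longrightarrow> h = h0) \<and>
     ran_perpperp_eq C h0 g \<and>
     (st f \<cdot> f = st g \<cdot> g \<longleftrightarrow> is_partial_isometry C h0 \<and> ker_le_ran_perp C h0 f) \<and>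
     (is_epi C f \<longrightarrow> (st f \<cdot> f = st g \<cdot> g \<longleftrightarrow> is_isometry C h0)) \<and>
     (is_epi C f \<and> is_epi C g \<longrightarrow> (st f \<cdot> f = st g \<cdot> g \<longleftrightarrow> is_unitary C h0))"
proof -
  obtain e where e: "e \<in> hom C (Cod C f) (Cod C g)" "e \<cdot> f = g"
    using ex unfolding is_extension_def by blast
  have ea: "e \<in> Arr C" "Dom C e = Cod C f" "Cod C e = Cod C g" using e(1) unfolding hom_def by auto
  obtain p q v where P: "pat f p q v" using pat_ex f by blast
  note F = pat_facts[OF P]
  have E: "q \<cdot> v = f" using pat_eq[OF P] .
  have Fa: "p \<in> Arr C" "Cod C p = Cod C f" "q \<in> Arr C" "Cod C q = Cod C f"
    "v \<in> Arr C" "Cod C v = Dom C q" "Dom C v = Dom C f" using F by auto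
  define h0 where "h0 = e \<cdot> (q \<cdot> st q)"
  have h0a: "h0 \<in> Arr C" "Dom C h0 = Cod C f" "Cod C h0 = Cod C g" using h0_def ea Fa by auto
  have sth0: "st h0 = q \<cdot> (st q \<cdot> st e)" using h0_def ea Fa by simp
  have h0q: "h0 \<cdot> q = e \<cdot> q" using h0_def ea Fa F by simp
  have h0qx: "h0 \<cdot> (q \<cdot> x) = e \<cdot> (q \<cdot> x)" if "x \<in> Arr C" "Cod C x = Dom C q" for x
    using h0_def ea Fa F that by simp
  have h0f: "h0 \<cdot> f = g"
  proof -
    have "h0 \<cdot> (q \<cdot> v) = e \<cdot> (q \<cdot> v)" using h0_def ea Fa F by simp
    then show ?thesis using E e(2) by simp
  qed
  have ext0: "is_extension C f g h0" unfolding is_extension_def hom_def using h0a h0f by simp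
  have Zq: "zr (st q \<cdot> w) \<longleftrightarrow> zr (st f \<cdot> w)" if "w \<in> Arr C" "Cod C w = Cod C f" for w
    using pat_P2[OF P] that by simp
  have kge0: "ker_ge_ran_perp C h0 f"
    unfolding ker_ge_ran_perp_def is_perp_def
  proof (intro allI impI)
    fix k r p' assume a: "is_kernel C h0 k" "is_range C f r" "is_kernel C (st r) p'"
    have ra: "r \<in> Arr C" "Cod C r = Cod C f" using rng_facts[OF a(2)] by auto
    show "subobj_le C p' k"
    proof (rule ker_le_Z[OF a(3) a(1)])
      show "Dom C (st r) = Dom C h0" using ra h0a by simp
      fix w assume w: "w \<in> Arr C" "Cod C w = Dom C (st r)" "zr (st r \<cdot> w)"
      have "zr (st f \<cdot> w)" using range_Z[OF a(2), of w] w ra by simp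
      then have zq: "zr (st q \<cdot> w)" using Zq w ra by simp
      have "h0 \<cdot> w = (e \<cdot> q) \<cdot> (st q \<cdot> w)" using h0_def ea Fa w ra by simp
      then show "zr (h0 \<cdot> w)" using zero_compL[OF zq, of "e \<cdot> q"] ea Fa w ra by simp
    qed
  qed
  have hp: "zr (h \<cdot> p)" if h: "is_extension C f g h" "ker_ge_ran_perp C h f" for h
  proof -
    have ha: "h \<in> Arr C" "Dom C h = Cod C f" using h(1) unfolding is_extension_def hom_def by auto
    obtain R where R: "is_range C f R" using range_ex f by blast
    have Ra: "R \<in> Arr C" "Cod C R = Cod C f" using rng_facts[OF R] by auto
    obtain p'' where p'': "is_kernel C (st R) p''" using isoker_ex[of "st R"] Ra by auto
    obtain k where k: "is_kernel C h k" using isoker_ex[of h] ha by auto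
    have 1: "subobj_le C p'' k" using h(2) k R p'' unfolding ker_ge_ran_perp_def is_perp_def by blast
    have 2: "subobj_le C p p''"
    proof (rule ker_le_Z[OF F(14) p''])
      show "Dom C (st f) = Dom C (st R)" using f Ra by simp
      fix w assume w: "w \<in> Arr C" "Cod C w = Dom C (st f)" "zr (st f \<cdot> w)"
      then show "zr (st R \<cdot> w)" using range_Z[OF R, of w] f by simp
    qed
    obtain s where s: "s \<in> hom C (Dom C p) (Dom C p'')" "p'' \<cdot> s = p" using 2 unfolding subobj_le_def by blast
    have sa: "s \<in> Arr C" "Dom C s = Dom C p" "Cod C s = Dom C p''" using s(1) unfolding hom_def by auto
    have p''a: "p'' \<in> Arr C" using ker_arr[OF p''] by simp
    have "zr (h \<cdot> p'')" using ker_zero_comp[OF k 1 p''a] .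
    moreover have "h \<cdot> p = (h \<cdot> p'') \<cdot> s" using s(2) sa p''a ha ker_arr[OF p''] Ra by simp
    ultimately show ?thesis using zero_compR[of "h \<cdot> p''" s] sa p''a ha ker_arr[OF p''] Ra by simp
  qed
  have uniq: "h = h0" if h: "is_extension C f g h" "ker_ge_ran_perp C h f" for h
  proof -
    have ha: "h \<in> Arr C" "Dom C h = Cod C f" "Cod C h = Cod C g" "h \<cdot> f = g"
      using h(1) unfolding is_extension_def hom_def by auto
    show ?thesis
    proof (rule pat_joint[OF P])
      show "h \<in> Arr C" "Dom C h = Cod C f" "h0 \<in> Arr C" "Dom C h0 = Cod C f" "Cod C h = Cod C h0"
        using ha h0a by auto
      show "h \<cdot> p = h0 \<cdot> p"
        by (rule zero_uniq[OF hp[OF h] hp[OF ext0 kge0]]) (use ha h0a Fa in simp_all)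
      have "(h \<cdot> q) \<cdot> v = (h0 \<cdot> q) \<cdot> v" using ha h0a Fa E h0f by simp
      then show "h \<cdot> q = h0 \<cdot> q"
        by (rule pat_cancel[OF P, rotated -1]) (use ha h0a Fa in simp_all)
    qed
  qed
  have Zh0g: "zr (st h0 \<cdot> w) \<longleftrightarrow> zr (st g \<cdot> w)" if w: "w \<in> Arr C" "Cod C w = Cod C g" for w
  proof
    assume z: "zr (st h0 \<cdot> w)"
    have "st (h0 \<cdot> f) = st f \<cdot> st h0" using h0a f by simp
    then have "st g \<cdot> w = st f \<cdot> (st h0 \<cdot> w)" using h0f h0a f w by simp
    then show "zr (st g \<cdot> w)" using zero_compL[OF z, of "st f"] h0a f w by simp
  next
    assume z: "zr (st g \<cdot> w)"
    have "st (h0 \<cdot> f) = st f \<cdot> st h0" using h0a f by simp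
    then have "st g \<cdot> w = st f \<cdot> (st h0 \<cdot> w)" using h0f h0a f w by simp
    then have "zr (st f \<cdot> (st h0 \<cdot> w))" using z by simp
    then obtain t where t: "t \<in> Arr C" "Cod C t = Dom C p" "p \<cdot> t = st h0 \<cdot> w"
      using pat_P1[OF P, of "st h0 \<cdot> w"] h0a w by auto
    have "st p \<cdot> (p \<cdot> t) = t" using t(1,2) F by simp
    then have "t = st p \<cdot> (st h0 \<cdot> w)" using t(3) by simp
    also have "\<dots> = (st p \<cdot> q) \<cdot> (st q \<cdot> (st e \<cdot> w))" using sth0 Fa ea w by simp
    finally have "zr t" using zero_compR[OF F(7), of "st q \<cdot> (st e \<cdot> w)"] Fa ea w by simp
    then have "zr (p \<cdot> t)" using zero_compL[of t p] t Fa by simp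
    then show "zr (st h0 \<cdot> w)" using t(3) by simp
  qed
  have rpp: "ran_perpperp_eq C h0 g"
    unfolding ran_perpperp_eq_def is_perp_def
  proof (intro allI impI)
    fix r1 p1 q1 r2 p2 q2
    assume a: "is_range C h0 r1" "is_kernel C (st r1) p1" "is_kernel C (st p1) q1"
      "is_range C g r2" "is_kernel C (st r2) p2" "is_kernel C (st p2) q2"
    have r1a: "r1 \<in> Arr C" "Cod C r1 = Cod C g" using rng_facts[OF a(1)] h0a by auto
    have r2a: "r2 \<in> Arr C" "Cod C r2 = Cod C g" using rng_facts[OF a(4)] by auto
    have p1a: "p1 \<in> Arr C" "Cod C p1 = Cod C g" using ker_arr[OF a(2)] r1a by auto
    have p2a: "p2 \<in> Arr C" "Cod C p2 = Cod C g" using ker_arr[OF a(5)] r2a by auto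
    have Z: "zr (st r1 \<cdot> w) \<longleftrightarrow> zr (st r2 \<cdot> w)" if w: "w \<in> Arr C" "Cod C w = Cod C g" for w
      using range_Z[OF a(1), of w] range_Z[OF a(4), of w] Zh0g[OF w] w h0a by simp
    have s12: "subobj_le C p1 p2"
      by (rule ker_le_Z[OF a(2) a(5)]) (use r1a r2a Z in auto)
    have s21: "subobj_le C p2 p1"
      by (rule ker_le_Z[OF a(5) a(2)]) (use r1a r2a Z in auto)
    have "subobj_le C q1 q2"
    proof (rule ker_le_Z[OF a(3) a(6)])
      show "Dom C (st p1) = Dom C (st p2)" using p1a p2a by simp
      fix w assume w: "w \<in> Arr C" "Cod C w = Dom C (st p1)" "zr (st p1 \<cdot> w)"
      show "zr (st p2 \<cdot> w)" by (rule sub_Z[OF s21 p2a(1) p1a(1)]) (use w p1a in auto)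
    qed
    moreover have "subobj_le C q2 q1"
    proof (rule ker_le_Z[OF a(6) a(3)])
      show "Dom C (st p2) = Dom C (st p1)" using p1a p2a by simp
      fix w assume w: "w \<in> Arr C" "Cod C w = Dom C (st p2)" "zr (st p2 \<cdot> w)"
      show "zr (st p1 \<cdot> w)" by (rule sub_Z[OF s12 p1a(1) p2a(1)]) (use w p2a in auto)
    qed
    ultimately show "subobj_eq C q1 q2" unfolding subobj_eq_def by blast
  qed
  have J: "st q \<cdot> (st e \<cdot> (e \<cdot> q)) = I (Dom C q)" if ff: "st f \<cdot> f = st g \<cdot> g"
  proof -
    define X where "X = st h0 \<cdot> (h0 \<cdot> f)"
    have Xa: "X \<in> Arr C" "Dom C X = Dom C f" "Cod C X = Cod C f" using X_def f h0a by auto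
    have "st (h0 \<cdot> f) \<cdot> (h0 \<cdot> f) = st f \<cdot> X" using X_def f h0a by simp
    then have 1: "st f \<cdot> X = st f \<cdot> f" using ff h0f by simp
    have "st (st f \<cdot> X) = st X \<cdot> f" using Xa f by simp
    moreover have "st (st f \<cdot> f) = st f \<cdot> f" using f by simp
    ultimately have "st X \<cdot> f = st f \<cdot> f" using 1 by simp
    then have "st X \<cdot> (q \<cdot> v) = st f \<cdot> (q \<cdot> v)" using E by simp
    then have "(st X \<cdot> q) \<cdot> v = (st f \<cdot> q) \<cdot> v" using Xa f Fa by simp
    then have "st X \<cdot> q = st f \<cdot> q"
      by (rule pat_cancel[OF P, rotated -1]) (use Xa f Fa in simp_all)
    then have "st (st X \<cdot> q) = st (st f \<cdot> q)" by simp
    then have 2: "st q \<cdot> X = st q \<cdot> f" using Xa f Fa by simp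
    have "st q \<cdot> X = st q \<cdot> (q \<cdot> (st q \<cdot> (st e \<cdot> (h0 \<cdot> f))))" using X_def sth0 Fa ea h0a f by simp
    also have "\<dots> = st q \<cdot> (st e \<cdot> (h0 \<cdot> (q \<cdot> v)))" using Fa ea h0a f F E by simp
    also have "\<dots> = (st q \<cdot> (st e \<cdot> (e \<cdot> q))) \<cdot> v" using h0qx[of v] Fa ea h0a F by simp
    finally have 3: "st q \<cdot> X = (st q \<cdot> (st e \<cdot> (e \<cdot> q))) \<cdot> v" .
    have "st q \<cdot> f = st q \<cdot> (q \<cdot> v)" using E by simp
    also have "\<dots> = I (Dom C q) \<cdot> v" using Fa F by simp
    finally have "(st q \<cdot> (st e \<cdot> (e \<cdot> q))) \<cdot> v = I (Dom C q) \<cdot> v" using 2 3 by simp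
    then show ?thesis
      by (rule pat_cancel[OF P, rotated -1]) (use Fa ea in simp_all)
  qed
  have J2: "st q \<cdot> (st e \<cdot> (e \<cdot> (q \<cdot> x))) = x" if ff: "st f \<cdot> f = st g \<cdot> g" and x: "x \<in> Arr C" "Cod C x = Dom C q" for x
  proof -
    have "(st q \<cdot> (st e \<cdot> (e \<cdot> q))) \<cdot> x = st q \<cdot> (st e \<cdot> (e \<cdot> (q \<cdot> x)))" using x Fa ea by simp
    then show ?thesis using J[OF ff] x by simp
  qed
  have h0h0: "st h0 \<cdot> h0 = q \<cdot> st q" if ff: "st f \<cdot> f = st g \<cdot> g"
  proof -
    have "st h0 \<cdot> h0 = q \<cdot> (st q \<cdot> (st e \<cdot> (e \<cdot> (q \<cdot> st q))))" using sth0 h0_def Fa ea by simp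
    then show ?thesis using J2[OF ff, of "st q"] Fa by simp
  qed
  have iii: "st f \<cdot> f = st g \<cdot> g \<longleftrightarrow> is_partial_isometry C h0 \<and> ker_le_ran_perp C h0 f"
  proof
    assume ff: "st f \<cdot> f = st g \<cdot> g"
    have "h0 \<cdot> (st h0 \<cdot> h0) = e \<cdot> (q \<cdot> (st q \<cdot> (q \<cdot> st q)))" using h0h0[OF ff] h0_def Fa ea by simp
    also have "\<dots> = h0" using h0_def Fa ea F by simp
    finally have pi: "is_partial_isometry C h0" unfolding is_partial_isometry_def using h0a by simp
    have kl: "ker_le_ran_perp C h0 f"
      unfolding ker_le_ran_perp_def is_perp_def
    proof (intro allI impI)
      fix k r p' assume a: "is_kernel C h0 k" "is_range C f r" "is_kernel C (st r) p'"
      have ra: "r \<in> Arr C" "Cod C r = Cod C f" using rng_facts[OF a(2)] by auto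
      show "subobj_le C k p'"
      proof (rule ker_le_Z[OF a(1) a(3)])
        show "Dom C h0 = Dom C (st r)" using ra h0a by simp
        fix w assume w: "w \<in> Arr C" "Cod C w = Dom C h0" "zr (h0 \<cdot> w)"
        have "h0 \<cdot> w = e \<cdot> (q \<cdot> (st q \<cdot> w))" using h0_def Fa ea w h0a by simp
        then have z: "zr (e \<cdot> (q \<cdot> (st q \<cdot> w)))" using w by simp
        have "st q \<cdot> (st e \<cdot> (e \<cdot> (q \<cdot> (st q \<cdot> w)))) = st q \<cdot> w"
          using J2[OF ff, of "st q \<cdot> w"] Fa w h0a by simp
        moreover have "zr (st q \<cdot> (st e \<cdot> (e \<cdot> (q \<cdot> (st q \<cdot> w)))))"
          using zero_compL[OF z, of "st q \<cdot> st e"] Fa ea w h0a by simp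
        ultimately have "zr (st q \<cdot> w)" by simp
        then have "zr (st f \<cdot> w)" using Zq w h0a by simp
        then show "zr (st r \<cdot> w)" using range_Z[OF a(2), of w] w h0a by simp
      qed
    qed
    show "is_partial_isometry C h0 \<and> ker_le_ran_perp C h0 f" using pi kl by simp
  next
    assume "is_partial_isometry C h0 \<and> ker_le_ran_perp C h0 f"
    then show "st f \<cdot> f = st g \<cdot> g" using pi_ff[OF f h0a(1,2) h0f] by simp
  qed
  have iv: "is_epi C f \<longrightarrow> (st f \<cdot> f = st g \<cdot> g \<longleftrightarrow> is_isometry C h0)"
  proof (intro impI iffI)
    assume ep: "is_epi C f" and ff: "st f \<cdot> f = st g \<cdot> g"
    have "(q \<cdot> st q) \<cdot> f = I (Cod C f) \<cdot> f"
    proof -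
      have "(q \<cdot> st q) \<cdot> (q \<cdot> v) = q \<cdot> v" using Fa F by simp
      then show ?thesis using E f by simp
    qed
    then have "q \<cdot> st q = I (Cod C f)" using ep Fa f unfolding is_epi_def by simp
    then show "is_isometry C h0" unfolding is_isometry_def using h0h0[OF ff] h0a by simp
  next
    assume "is_isometry C h0"
    then show "st f \<cdot> f = st g \<cdot> g" unfolding is_isometry_def using iso_ff[OF f h0a(1,2) h0f] by simp
  qed
  have v: "is_epi C f \<and> is_epi C g \<longrightarrow> (st f \<cdot> f = st g \<cdot> g \<longleftrightarrow> is_unitary C h0)"
  proof (intro impI iffI)
    assume ep: "is_epi C f \<and> is_epi C g" and ff: "st f \<cdot> f = st g \<cdot> g"
    have iso: "is_isometry C h0" using iv ep ff by simp
    then have i1: "st h0 \<cdot> h0 = I (Cod C f)" unfolding is_isometry_def using h0a by simp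
    have "(h0 \<cdot> st h0) \<cdot> g = h0 \<cdot> ((st h0 \<cdot> h0) \<cdot> f)" using h0f[symmetric] h0a f by simp
    also have "\<dots> = I (Cod C g) \<cdot> g" using i1 h0f f g h0a by simp
    finally have "h0 \<cdot> st h0 = I (Cod C g)" using ep h0a g unfolding is_epi_def by simp
    then have a1: "h0 \<cdot> st h0 = I (Cod C h0)" using h0a by simp
    have a2: "st h0 \<cdot> h0 = I (Dom C h0)" using i1 h0a by simp
    have hs: "st h0 \<in> hom C (Cod C h0) (Dom C h0)" using h0a unfolding hom_def by simp
    have "is_iso C h0" unfolding is_iso_def using hs a1 a2 h0a(1) by blast
    then show "is_unitary C h0" unfolding is_unitary_def using iso by simp
  next
    assume "is_unitary C h0"
    then show "st f \<cdot> f = st g \<cdot> g" unfolding is_unitary_def is_isometry_def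
      using iso_ff[OF f h0a(1,2) h0f] by simp
  qed
  show ?thesis using ext0 kge0 uniq rpp iii iv v by blast
qed

end

theorem proposition7p8:
  fixes C :: "('o, 'm) starcat" and f g :: 'm
  assumes "is_pre_hilbert_star_category C"
    and "f \<in> Arr C" and "g \<in> Arr C" and "Dom C f = Dom C g"
    and "\<exists>e. is_extension C f g e"
  shows "(\<exists>!h. is_extension C f g h \<and> ker_ge_ran_perp C h f) \<and>
    (\<forall>h. is_extension C f g h \<and> ker_ge_ran_perp C h f \<longrightarrow>
       ran_perpperp_eq C h g \<and>
       (Comp C (Star C f) f = Comp C (Star C g) g \<longleftrightarrow>
          is_partial_isometry C h \<and> ker_le_ran_perp C h f) \<and>
       (is_epi C f \<longrightarrow> (Comp C (Star C f) f = Comp C (Star C g) g \<longleftrightarrow> is_isometry C h)) \<and>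
       (is_epi C f \<and> is_epi C g \<longrightarrow>
          (Comp C (Star C f) f = Comp C (Star C g) g \<longleftrightarrow> is_unitary C h)))"
proof -
  interpret phc C by unfold_locales (rule assms(1))
  obtain h0 where H: "is_extension C f g h0" "ker_ge_ran_perp C h0 f"
     "\<forall>h. is_extension C f g h \<and> ker_ge_ran_perp C h f \<longrightarrow> h = h0"
     "ran_perpperp_eq C h0 g"
     "Comp C (Star C f) f = Comp C (Star C g) g \<longleftrightarrow> is_partial_isometry C h0 \<and> ker_le_ran_perp C h0 f"
     "is_epi C f \<longrightarrow> (Comp C (Star C f) f = Comp C (Star C g) g \<longleftrightarrow> is_isometry C h0)"
     "is_epi C f \<and> is_epi C g \<longrightarrow> (Comp C (Star C f) f = Comp C (Star C g) g \<longleftrightarrow> is_unitary C h0)"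
    using main[OF assms(2-5)] by blast
  have "\<exists>!h. is_extension C f g h \<and> ker_ge_ran_perp C h f" using H(1-3) by blast
  moreover have "\<forall>h. is_extension C f g h \<and> ker_ge_ran_perp C h f \<longrightarrow>
       ran_perpperp_eq C h g \<and>
       (Comp C (Star C f) f = Comp C (Star C g) g \<longleftrightarrow>
          is_partial_isometry C h \<and> ker_le_ran_perp C h f) \<and>
       (is_epi C f \<longrightarrow> (Comp C (Star C f) f = Comp C (Star C g) g \<longleftrightarrow> is_isometry C h)) \<and>
       (is_epi C f \<and> is_epi C g \<longrightarrow>
          (Comp C (Star C f) f = Comp C (Star C g) g \<longleftrightarrow> is_unitary C h))"
  proof (intro allI impI)
    fix h assume "is_extension C f g h \<and> ker_ge_ran_perp C h f"
    then have "h = h0" using H(3) by blast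
    then show "ran_perpperp_eq C h g \<and>
       (Comp C (Star C f) f = Comp C (Star C g) g \<longleftrightarrow>
          is_partial_isometry C h \<and> ker_le_ran_perp C h f) \<and>
       (is_epi C f \<longrightarrow> (Comp C (Star C f) f = Comp C (Star C g) g \<longleftrightarrow> is_isometry C h)) \<and>
       (is_epi C f \<and> is_epi C g \<longrightarrow>
          (Comp C (Star C f) f = Comp C (Star C g) g \<longleftrightarrow> is_unitary C h))"
      using H(4-7) by simp
  qed
  ultimately show ?thesis by blast
qed

end
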